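(* Let $A=\begin{bmatrix}0&B\\0&C\end{bmatrix}$ (with $B^*B+C^*C=I$) be a unitarily irreducible nilpotent partial isometry with $C$ of size at most $4$. If $A$ has the Circularity property, then $C$ has the Circularity property.
   Context: A partial isometry is a matrix $A$ with $\|Ax\|=\|x\|$ for all $x\perp\ker A$; every partial isometry with nontrivial kernel is unitarily similar to a matrix $\begin{bmatrix}0&B\\0&C\end{bmatrix}$ on $\mathbb{C}^m\oplus\mathbb{C}^d$ with $m=\dim\ker A$ and $B^*B+C^*C=I_d$. A matrix is unitarily irreducible if it is not unitarily similar to a direct sum of two matrices of smaller size. For $X\in M_n$, $H_X(\theta)=\frac12(e^{-i\theta}X+e^{i\theta}X^* )$; $X$ has the Circularity property if the spectrum of $H_X(\theta)$ is independent of $\theta\in\mathbb{R}$. *)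

theory Defs
  imports "Jordan_Normal_Form.Spectral_Radius" "Jordan_Normal_Form.Schur_Decomposition"
begin

definition unitary_mat :: "complex mat \<Rightarrow> bool" where
  "unitary_mat U \<longleftrightarrow> square_mat U \<and> mat_adjoint U * U = 1\<^sub>m (dim_row U)"

definition unitarily_irreducible :: "complex mat \<Rightarrow> bool" where
  "unitarily_irreducible X \<longleftrightarrow> square_mat X \<and>
     \<not> (\<exists>U X1 X2 n1 n2. n1 > 0 \<and> n2 > 0 \<and> n1 + n2 = dim_row X \<and>
          unitary_mat U \<and> U \<in> carrier_mat (dim_row X) (dim_row X) \<and>
          X1 \<in> carrier_mat n1 n1 \<and> X2 \<in> carrier_mat n2 n2 \<and>
          mat_adjoint U * X * U = four_block_mat X1 (0\<^sub>m n1 n2) (0\<^sub>m n2 n1) X2)"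

definition nilpotent_mat :: "complex mat \<Rightarrow> bool" where
  "nilpotent_mat X \<longleftrightarrow> square_mat X \<and> (\<exists>k. X ^\<^sub>m k = 0\<^sub>m (dim_row X) (dim_row X))"

definition herm_part :: "complex mat \<Rightarrow> real \<Rightarrow> complex mat" where
  "herm_part X \<theta> = (1/2 :: complex) \<cdot>\<^sub>m
     ((cis (-\<theta>)) \<cdot>\<^sub>m X + (cis \<theta>) \<cdot>\<^sub>m mat_adjoint X)"

definition circularity :: "complex mat \<Rightarrow> bool" where
  "circularity X \<longleftrightarrow> (\<forall>\<theta>1 \<theta>2. spectrum (herm_part X \<theta>1) = spectrum (herm_part X \<theta>2))"

end

theory Submission
  imports Defs
begin

definition tr :: "complex mat \<Rightarrow> complex" where
  "tr M = (\<Sum>i<dim_row M. M $$ (i,i))"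

lemma adj_dims[simp]: "dim_row (mat_adjoint M) = dim_col M" "dim_col (mat_adjoint M) = dim_row M"
  unfolding mat_adjoint_def by auto

lemma adj_carrier[simp]: "M \<in> carrier_mat n k \<Longrightarrow> mat_adjoint M \<in> carrier_mat k n"
  unfolding carrier_mat_def by auto

lemma adj_index[simp]: "i < dim_col M \<Longrightarrow> j < dim_row M \<Longrightarrow> mat_adjoint M $$ (i,j) = cnj (M $$ (j,i))"
  unfolding mat_adjoint_def by (auto simp: mat_of_rows_def)

lemma tr_mult_comm: assumes "A \<in> carrier_mat n k" "B \<in> carrier_mat k n"
  shows "tr (A * B) = tr (B * A)"
proof -
  have "tr (A*B) = (\<Sum>i<n. \<Sum>l<k. A $$ (i,l) * B $$ (l,i))"
    unfolding tr_def using assms by (auto simp: scalar_prod_def intro!: sum.cong lessThan_atLeast0)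
  also have "\<dots> = (\<Sum>l<k. \<Sum>i<n. B $$ (l,i) * A $$ (i,l))"
    by (subst sum.swap) (simp add: mult.commute)
  also have "\<dots> = tr (B*A)"
    unfolding tr_def using assms by (auto simp: scalar_prod_def intro!: sum.cong lessThan_atLeast0)
  finally show ?thesis .
qed

lemma tr_adj: "M \<in> carrier_mat n n \<Longrightarrow> tr (mat_adjoint M) = cnj (tr M)"
  unfolding tr_def by auto

lemma tr_add: "A \<in> carrier_mat n n \<Longrightarrow> B \<in> carrier_mat n n \<Longrightarrow> tr (A + B) = tr A + tr B"
  unfolding tr_def by (auto simp: sum.distrib)

lemma tr_smult: "A \<in> carrier_mat n n \<Longrightarrow> tr (c \<cdot>\<^sub>m A) = c * tr A"
  unfolding tr_def by (auto simp: sum_distrib_left)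

lemma tr_zero[simp]: "tr (0\<^sub>m n n) = 0"
  unfolding tr_def by auto

lemma tr_four_block_0: "D \<in> carrier_mat d d \<Longrightarrow> tr (four_block_mat (0\<^sub>m m m) (0\<^sub>m m d) (0\<^sub>m d m) D) = tr D"
proof -
  assume D: "D \<in> carrier_mat d d"
  have "tr (four_block_mat (0\<^sub>m m m) (0\<^sub>m m d) (0\<^sub>m d m) D) = (\<Sum>i<m+d. if i < m then 0 else D $$ (i-m,i-m))"
    unfolding tr_def using D by (auto intro!: sum.cong)
  also have "\<dots> = (\<Sum>i\<in>{m..<m+d}. D $$ (i-m,i-m))"
    by (subst sum.If_cases) (auto intro!: sum.cong)
  also have "\<dots> = (\<Sum>i<d. D $$ (i,i))"
    by (rule sum.reindex_bij_witness[where i="\<lambda>i. i+m" and j="\<lambda>i. i - m"]) auto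
  finally show ?thesis using D unfolding tr_def by auto
qed

lemma ut_mult: fixes U :: "complex mat" assumes U: "U \<in> carrier_mat n n" and V: "V \<in> carrier_mat n n"
  and uU: "upper_triangular U" and uV: "upper_triangular V"
  shows "upper_triangular (U*V)" "\<And>i. i < n \<Longrightarrow> (U*V) $$ (i,i) = U $$ (i,i) * V $$ (i,i)"
proof -
  have zU: "\<And>i j. i < n \<Longrightarrow> j < i \<Longrightarrow> U $$ (i,j) = 0" using uU U unfolding upper_triangular_def by auto
  have zV: "\<And>i j. i < n \<Longrightarrow> j < i \<Longrightarrow> V $$ (i,j) = 0" using uV V unfolding upper_triangular_def by auto
  have e: "\<And>i j. i < n \<Longrightarrow> j < n \<Longrightarrow> (U*V) $$ (i,j) = (\<Sum>l\<in>{0..<n}. U $$ (i,l) * V $$ (l,j))"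
    using U V by (auto simp: scalar_prod_def)
  show "upper_triangular (U*V)"
    unfolding upper_triangular_def
  proof (intro allI impI)
    fix i j assume i: "i < dim_row (U*V)" and j: "j < i"
    have "(U*V) $$ (i,j) = (\<Sum>l\<in>{0..<n}. U $$ (i,l) * V $$ (l,j))" using i j U by (intro e) auto
    also have "\<dots> = 0"
    proof (rule sum.neutral, intro ballI)
      fix l assume l: "l \<in> {0..<n}"
      show "U $$ (i,l) * V $$ (l,j) = 0"
      proof (cases "l < i")
        case True thus ?thesis using zU[of i l] i U by auto
      next
        case False thus ?thesis using zV[of l j] l j by auto
      qed
    qed
    finally show "(U*V) $$ (i,j) = 0" .
  qed
  fix i assume i: "i < n"
  have "(U*V) $$ (i,i) = (\<Sum>l\<in>{0..<n}. U $$ (i,l) * V $$ (l,i))" using i by (intro e) auto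
  also have "\<dots> = U $$ (i,i) * V $$ (i,i)"
  proof -
    have "(\<Sum>l\<in>{0..<n}. U $$ (i,l) * V $$ (l,i)) = (\<Sum>l\<in>{i}. U $$ (i,l) * V $$ (l,i))"
    proof (rule sum.mono_neutral_right, simp, use i in simp, intro ballI)
    fix l assume l: "l \<in> {0..<n} - {i}"
    show "U $$ (i,l) * V $$ (l,i) = 0"
    proof (cases "l < i")
      case True thus ?thesis using zU[of i l] i by auto
    next
      case False thus ?thesis using zV[of l i] l by auto
    qed
  qed
  thus ?thesis by simp
  qed
  finally show "(U*V) $$ (i,i) = U $$ (i,i) * V $$ (i,i)" .
qed

lemma ut_pow: fixes U :: "complex mat" assumes U: "U \<in> carrier_mat n n" and uU: "upper_triangular U"
  shows "upper_triangular (U ^\<^sub>m k) \<and> (\<forall>i<n. (U ^\<^sub>m k) $$ (i,i) = U $$ (i,i) ^ k)"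
proof (induction k)
  case 0
  then show ?case using U by (auto simp: upper_triangular_def)
next
  case (Suc k)
  have c: "U ^\<^sub>m k \<in> carrier_mat n n" using U by auto
  show ?case using ut_mult[OF c U _ uU] Suc by (auto simp: mult.commute)
qed

lemma tr_pow_eigen: assumes M: "M \<in> carrier_mat n n"
  and cp: "char_poly M = (\<Prod>e\<leftarrow>es. [:- e, 1:])"
  shows "tr (M ^\<^sub>m k) = (\<Sum>e\<leftarrow>es. e ^ k)"
proof -
  obtain B P Q where sd: "schur_decomposition M es = (B,P,Q)" by (cases "schur_decomposition M es") auto
  from schur_decomposition[OF M cp sd] have sim: "similar_mat_wit M B P Q"
    and ut: "upper_triangular B" and dg: "diag_mat B = es" by auto
  from sim M have B: "B \<in> carrier_mat n n" and P: "P \<in> carrier_mat n n" and Q: "Q \<in> carrier_mat n n"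
    and QP: "Q * P = 1\<^sub>m n"
    unfolding similar_mat_wit_def Let_def by auto
  have Bk: "B ^\<^sub>m k \<in> carrier_mat n n" using B by auto
  have "M ^\<^sub>m k = P * B ^\<^sub>m k * Q" using similar_mat_wit_pow_id[OF sim] .
  hence "tr (M ^\<^sub>m k) = tr (Q * (P * B ^\<^sub>m k))"
    using tr_mult_comm[of "P * B ^\<^sub>m k" n n Q] P Bk Q by auto
  also have "Q * (P * B ^\<^sub>m k) = (Q * P) * B ^\<^sub>m k"
    using assoc_mult_mat[OF Q P Bk] by simp
  also have "\<dots> = B ^\<^sub>m k" using QP Bk by (simp add: left_mult_one_mat)
  also have "tr (B ^\<^sub>m k) = (\<Sum>i<n. B $$ (i,i) ^ k)"
    unfolding tr_def using ut_pow[OF B ut, of k] B by auto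
  also have "\<dots> = (\<Sum>e\<leftarrow>es. e ^ k)"
    unfolding dg[symmetric] diag_mat_def using B
    by (simp add: sum_set_upt_conv_sum_list_nat[symmetric] lessThan_atLeast0 comp_def)
  finally show ?thesis .
qed

lemma spectrum_es: fixes M :: "complex mat" assumes M: "M \<in> carrier_mat n n"
  and cp: "char_poly M = (\<Prod>e\<leftarrow>es. [:- e, 1:])"
  shows "spectrum M = set es"
proof -
  have "spectrum M = {k. poly (char_poly M) k = 0}" by (rule spectrum_root_char_poly[OF M])
  also have "\<dots> = set es" unfolding cp
    by (induction es) (auto simp: poly_prod_list)
  finally show ?thesis .
qed

fun wd :: "complex mat \<Rightarrow> complex mat \<Rightarrow> nat \<Rightarrow> bool list \<Rightarrow> complex mat" where
  "wd X Y n [] = 1\<^sub>m n"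
| "wd X Y n (b # bs) = wd X Y n bs * (if b then X else Y)"

fun allw :: "nat \<Rightarrow> bool list list" where
  "allw 0 = [[]]"
| "allw (Suc k) = map (Cons True) (allw k) @ map (Cons False) (allw k)"

fun msum :: "nat \<Rightarrow> complex mat list \<Rightarrow> complex mat" where
  "msum n [] = 0\<^sub>m n n"
| "msum n (M # Ms) = M + msum n Ms"

definition cT :: "bool list \<Rightarrow> nat" where "cT bs = length (filter id bs)"
definition cF :: "bool list \<Rightarrow> nat" where "cF bs = length (filter Not bs)"

lemma cT_simps[simp]: "cT [] = 0" "cT (True # bs) = Suc (cT bs)" "cT (False # bs) = cT bs"
  unfolding cT_def by auto
lemma cF_simps[simp]: "cF [] = 0" "cF (True # bs) = cF bs" "cF (False # bs) = Suc (cF bs)"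
  unfolding cF_def by auto

lemma allw_length: "bs \<in> set (allw k) \<Longrightarrow> length bs = k"
  by (induction k arbitrary: bs) auto

lemma cT_cF: "cT bs + cF bs = length bs"
  by (induction bs) (auto simp: cT_def cF_def)

lemma wd_carrier[simp]: "X \<in> carrier_mat n n \<Longrightarrow> Y \<in> carrier_mat n n \<Longrightarrow> wd X Y n bs \<in> carrier_mat n n"
  by (induction bs) auto

lemma msum_carrier: "(\<And>M. M \<in> set Ms \<Longrightarrow> M \<in> carrier_mat n n) \<Longrightarrow> msum n Ms \<in> carrier_mat n n"
  by (induction Ms) auto

lemma msum_append: "(\<And>M. M \<in> set Ms \<Longrightarrow> M \<in> carrier_mat n n) \<Longrightarrow> (\<And>M. M \<in> set Ns \<Longrightarrow> M \<in> carrier_mat n n) \<Longrightarrow>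
  msum n (Ms @ Ns) = msum n Ms + msum n Ns"
proof (induction Ms)
  case Nil
  then show ?case using msum_carrier[of Ns n] by auto
next
  case (Cons M Ms)
  have "msum n ((M # Ms) @ Ns) = M + (msum n Ms + msum n Ns)" using Cons by auto
  also have "\<dots> = (M + msum n Ms) + msum n Ns"
    using Cons msum_carrier[of Ms n] msum_carrier[of Ns n] by (subst assoc_add_mat) auto
  finally show ?case by simp
qed

lemma msum_mult: "(\<And>M. M \<in> set Ms \<Longrightarrow> M \<in> carrier_mat n n) \<Longrightarrow> Z \<in> carrier_mat n n \<Longrightarrow>
  msum n Ms * Z = msum n (map (\<lambda>M. M * Z) Ms)"
proof (induction Ms)
  case Nil
  then show ?case by auto
next
  case (Cons M Ms)
  have "msum n (M # Ms) * Z = M * Z + msum n Ms * Z"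
    using Cons msum_carrier[of Ms n] by (simp add: add_mult_distrib_mat[of _ n n])
  then show ?case using Cons by auto
qed

lemma tr_msum: "(\<And>M. M \<in> set Ms \<Longrightarrow> M \<in> carrier_mat n n) \<Longrightarrow> tr (msum n Ms) = (\<Sum>M\<leftarrow>Ms. tr M)"
proof (induction Ms)
  case Nil
  then show ?case by auto
next
  case (Cons M Ms)
  then show ?case using msum_carrier[of Ms n] tr_add[of M n "msum n Ms"] by auto
qed

lemma tr_msum_map: "(\<And>x. f x \<in> carrier_mat n n) \<Longrightarrow> tr (msum n (map f L)) = (\<Sum>x\<leftarrow>L. tr (f x))"
  by (subst tr_msum[of _ n]) (auto simp: comp_def)

lemma pow_expand: assumes X: "X \<in> carrier_mat n n" and Y: "Y \<in> carrier_mat n n"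
  shows "(X + Y) ^\<^sub>m k = msum n (map (wd X Y n) (allw k))"
proof (induction k)
  case 0
  then show ?case using X Y by auto
next
  case (Suc k)
  let ?L = "map (wd X Y n) (allw k)"
  have cL: "\<And>M. M \<in> set ?L \<Longrightarrow> M \<in> carrier_mat n n" using X Y by auto
  have cS: "msum n ?L \<in> carrier_mat n n" using msum_carrier[OF cL] .
  have "(X + Y) ^\<^sub>m Suc k = msum n ?L * (X + Y)" using Suc by simp
  also have "\<dots> = msum n ?L * X + msum n ?L * Y"
    using cS X Y by (simp add: mult_add_distrib_mat[of _ n n])
  also have "msum n ?L * X = msum n (map (\<lambda>M. M * X) ?L)"
    by (rule msum_mult) (use cL X in auto)
  also have "\<dots> = msum n (map (wd X Y n) (map (Cons True) (allw k)))"
    by (simp add: comp_def)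
  also have "msum n ?L * Y = msum n (map (\<lambda>M. M * Y) ?L)"
    by (rule msum_mult) (use cL Y in auto)
  also have "\<dots> = msum n (map (wd X Y n) (map (Cons False) (allw k)))"
    by (simp add: comp_def)
  also have "msum n (map (wd X Y n) (map (Cons True) (allw k))) + msum n (map (wd X Y n) (map (Cons False) (allw k)))
     = msum n (map (wd X Y n) (allw (Suc k)))"
    by (simp only: allw.simps map_append, rule msum_append[symmetric]) (use X Y in \<open>auto intro!: mult_carrier_mat[of _ n n]\<close>)
  finally show ?case .
qed

lemma smult_smult_mat: "a \<cdot>\<^sub>m (b \<cdot>\<^sub>m A) = (a * b) \<cdot>\<^sub>m (A :: complex mat)"
  by (rule eq_matI) auto

lemma wd_smult: assumes X: "X \<in> carrier_mat n n" and Y: "Y \<in> carrier_mat n n"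
  shows "wd (a \<cdot>\<^sub>m X) (c \<cdot>\<^sub>m Y) n bs = (a ^ cT bs * c ^ cF bs) \<cdot>\<^sub>m wd X Y n bs"
proof (induction bs)
  case Nil
  then show ?case by auto
next
  case (Cons b bs)
  have W: "wd X Y n bs \<in> carrier_mat n n" using X Y by auto
  show ?case
  proof (cases b)
    case True
    then show ?thesis using Cons W X
      by (simp add: mult_smult_assoc_mat[of _ n n] mult_smult_distrib[of _ n n] smult_smult_mat ac_simps)
  next
    case False
    then show ?thesis using Cons W Y
      by (simp add: mult_smult_assoc_mat[of _ n n] mult_smult_distrib[of _ n n] smult_smult_mat ac_simps)
  qed
qed

lemma tr_pow_expand: assumes X: "X \<in> carrier_mat n n" and Y: "Y \<in> carrier_mat n n"
  shows "tr ((a \<cdot>\<^sub>m X + c \<cdot>\<^sub>m Y) ^\<^sub>m k) = (\<Sum>bs\<leftarrow>allw k. a ^ cT bs * c ^ cF bs * tr (wd X Y n bs))"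
proof -
  have "tr ((a \<cdot>\<^sub>m X + c \<cdot>\<^sub>m Y) ^\<^sub>m k) = (\<Sum>M\<leftarrow>map (wd (a \<cdot>\<^sub>m X) (c \<cdot>\<^sub>m Y) n) (allw k). tr M)"
    using X Y by (subst pow_expand[of _ n]) (auto simp: tr_msum_map[of _ n] comp_def)
  also have "\<dots> = (\<Sum>bs\<leftarrow>allw k. a ^ cT bs * c ^ cF bs * tr (wd X Y n bs))"
    using X Y by (simp add: comp_def wd_smult tr_smult[of _ n])
  finally show ?thesis .
qed

lemma infinite_range_cis: "infinite (range cis)"
proof
  assume fin: "finite (range cis)"
  have inj: "inj_on cis {0..pi}"
  proof (rule inj_onI)
    fix x y assume x: "x \<in> {0..pi}" and y: "y \<in> {0..pi}" and e: "cis x = cis y"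
    hence "cos x = cos y" by (metis cis.sel(1))
    thus "x = y" using x y cos_inj_pi by auto
  qed
  have "finite (cis ` {0..pi})" using fin by (rule finite_subset[rotated]) auto
  hence "finite {0..pi}" using finite_imageD inj by blast
  thus False by (metis infinite_Icc pi_gt_zero)
qed

lemma coeff_sum_list: "coeff (\<Sum>x\<leftarrow>L. p x) j = (\<Sum>x\<leftarrow>L. coeff (p x) j)"
  by (induction L) auto

lemma poly_sum_list: "poly (\<Sum>x\<leftarrow>L. p x) u = (\<Sum>x\<leftarrow>L. poly (p x) u)"
  by (induction L) auto

lemma sum_list_mult_const: "c * (\<Sum>x\<leftarrow>L. f x) = (\<Sum>x\<leftarrow>L. c * f x :: complex)"
  by (induction L) (auto simp: algebra_simps)

lemma term_identity0:
  fixes x y t :: complex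
  assumes xy: "x * y = 1"
  shows "x ^ (a + b) * ((y / 2) ^ a * (x / 2) ^ b * t) = t / 2 ^ (a + b) * x ^ (2 * b)"
proof -
  have "x ^ (a + b) * ((y / 2) ^ a * (x / 2) ^ b * t) = ((x * y) ^ a * (x ^ b * x ^ b) * t) / (2 ^ a * 2 ^ b)"
    by (simp add: power_add power_divide power_mult_distrib)
  also have "\<dots> = t / 2 ^ (a + b) * x ^ (2 * b)"
    using xy by (simp add: power_add mult_2)
  finally show ?thesis .
qed

lemma term_identity:
  assumes "a + b = k"
  shows "cis \<theta> ^ k * ((cis (-\<theta>) / 2) ^ a * (cis \<theta> / 2) ^ b * t) = t / 2 ^ k * cis \<theta> ^ (2 * b)"
proof -
  have one: "cis \<theta> * cis (-\<theta>) = 1" by (simp add: cis_mult)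
  show ?thesis using term_identity0[OF one, of a b t] assms by simp
qed

lemma fourier_extract:
  fixes t :: "bool list \<Rightarrow> complex" and F :: "complex set"
  assumes fin: "finite F"
    and hyp: "\<And>\<theta>::real. (\<Sum>bs\<leftarrow>allw k. (cis (-\<theta>) / 2) ^ cT bs * (cis \<theta> / 2) ^ cF bs * t bs) \<in> F"
    and j: "j \<noteq> k"
  shows "(\<Sum>bs\<leftarrow>allw k. if 2 * cF bs = j then t bs else 0) = 0"
proof -
  define q where "q = (\<Sum>bs\<leftarrow>allw k. monom (t bs / 2 ^ k) (2 * cF bs))"
  define g where "g = (\<lambda>\<theta>::real. (\<Sum>bs\<leftarrow>allw k. (cis (-\<theta>) / 2) ^ cT bs * (cis \<theta> / 2) ^ cF bs * t bs))"
  have pq: "poly q (cis \<theta>) = cis \<theta> ^ k * g \<theta>" for \<theta>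
  proof -
    have "cis \<theta> ^ k * g \<theta> = (\<Sum>bs\<leftarrow>allw k. cis \<theta> ^ k * ((cis (-\<theta>) / 2) ^ cT bs * (cis \<theta> / 2) ^ cF bs * t bs))"
      unfolding g_def by (rule sum_list_mult_const)
    also have "\<dots> = (\<Sum>bs\<leftarrow>allw k. t bs / 2 ^ k * cis \<theta> ^ (2 * cF bs))"
      by (rule arg_cong[where f=sum_list], rule map_cong[OF refl], rule term_identity)
         (metis allw_length cT_cF)
    also have "\<dots> = poly q (cis \<theta>)"
      unfolding q_def poly_sum_list by (simp add: poly_monom)
    finally show ?thesis by simp
  qed
  have "\<exists>c\<in>F. q = monom c k"
  proof (rule ccontr)
    assume no: "\<not> (\<exists>c\<in>F. q = monom c k)"
    have "range cis \<subseteq> (\<Union>c\<in>F. {u. poly (q - monom c k) u = 0})"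
    proof
      fix u assume "u \<in> range cis"
      then obtain \<theta> where u: "u = cis \<theta>" by auto
      have "g \<theta> \<in> F" using hyp unfolding g_def .
      moreover have "poly (q - monom (g \<theta>) k) u = 0" using pq[of \<theta>] u by (simp add: poly_monom)
      ultimately show "u \<in> (\<Union>c\<in>F. {u. poly (q - monom c k) u = 0})" by auto
    qed
    moreover have "finite (\<Union>c\<in>F. {u. poly (q - monom c k) u = 0})"
      using fin no by (intro finite_UN_I poly_roots_finite) auto
    ultimately have "finite (range cis)" by (rule finite_subset)
    thus False using infinite_range_cis by simp
  qed
  then obtain c where "q = monom c k" by auto
  hence "coeff q j = 0" using j by (simp add: coeff_monom)
  hence z: "(\<Sum>bs\<leftarrow>allw k. if 2 * cF bs = j then t bs / 2 ^ k else 0) = 0"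
    unfolding q_def coeff_sum_list by (simp add: coeff_monom)
  have e: "(\<lambda>bs. (1 / 2 ^ k) * (if 2 * cF bs = j then t bs else 0)) = (\<lambda>bs. if 2 * cF bs = j then t bs / 2 ^ k else 0)"
    by (auto simp: fun_eq_iff)
  have "(1 / 2 ^ k) * (\<Sum>bs\<leftarrow>allw k. if 2 * cF bs = j then t bs else 0) = 0"
    unfolding sum_list_mult_const e using z .
  thus ?thesis by simp
qed

lemma adj_mult: fixes A B :: "complex mat" assumes A: "A \<in> carrier_mat n k" and B: "B \<in> carrier_mat k l"
  shows "mat_adjoint (A * B) = mat_adjoint B * mat_adjoint A"
  by (rule eq_matI) (use A B in \<open>auto simp: scalar_prod_def mult.commute\<close>)

lemma adj_adj: "mat_adjoint (mat_adjoint M) = (M :: complex mat)"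
  by (rule eq_matI) auto

lemma adj_one[simp]: "mat_adjoint (1\<^sub>m n) = (1\<^sub>m n :: complex mat)"
  by (rule eq_matI) auto

lemma adj_zero[simp]: "mat_adjoint (0\<^sub>m n k) = (0\<^sub>m k n :: complex mat)"
  by (rule eq_matI) auto

lemma adj_four_block: fixes A1 A2 A3 A4 :: "complex mat" assumes "A1 \<in> carrier_mat n1 k1" "A2 \<in> carrier_mat n1 k2" "A3 \<in> carrier_mat n2 k1" "A4 \<in> carrier_mat n2 k2"
  shows "mat_adjoint (four_block_mat A1 A2 A3 A4) = four_block_mat (mat_adjoint A1) (mat_adjoint A3) (mat_adjoint A2) (mat_adjoint A4)"
  by (rule eq_matI) (use assms in auto)

lemma wd_snoc: assumes X: "X \<in> carrier_mat n n" and Y: "Y \<in> carrier_mat n n"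
  shows "wd X Y n (bs @ [b]) = (if b then X else Y) * wd X Y n bs"
proof (induction bs)
  case Nil
  then show ?case using X Y by auto
next
  case (Cons c cs)
  have W: "wd X Y n cs \<in> carrier_mat n n" using X Y by auto
  have Zb: "(if b then X else Y) \<in> carrier_mat n n" using X Y by auto
  have Zc: "(if c then X else Y) \<in> carrier_mat n n" using X Y by auto
  show ?case using Cons assoc_mult_mat[OF Zb W Zc] by simp
qed

lemma tr_wd_rot1: assumes X: "X \<in> carrier_mat n n" and Y: "Y \<in> carrier_mat n n"
  shows "tr (wd X Y n (b # bs)) = tr (wd X Y n (bs @ [b]))"
proof -
  have W: "wd X Y n bs \<in> carrier_mat n n" using X Y by auto
  have Zb: "(if b then X else Y) \<in> carrier_mat n n" using X Y by auto
  show ?thesis using tr_mult_comm[OF W Zb] wd_snoc[OF X Y] by simp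
qed

lemma adj_wd: assumes X: "X \<in> carrier_mat n n"
  shows "mat_adjoint (wd X (mat_adjoint X) n bs) = wd X (mat_adjoint X) n (rev (map Not bs))"
proof (induction bs)
  case Nil
  then show ?case by simp
next
  case (Cons b bs)
  have Y: "mat_adjoint X \<in> carrier_mat n n" using X by simp
  have W: "wd X (mat_adjoint X) n bs \<in> carrier_mat n n" using X Y by auto
  have Zb: "(if b then X else mat_adjoint X) \<in> carrier_mat n n" using X Y by auto
  have "mat_adjoint (wd X (mat_adjoint X) n (b # bs)) = mat_adjoint (if b then X else mat_adjoint X) * mat_adjoint (wd X (mat_adjoint X) n bs)"
    using adj_mult[OF W Zb] by simp
  also have "\<dots> = (if \<not> b then X else mat_adjoint X) * wd X (mat_adjoint X) n (rev (map Not bs))"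
    using Cons by (simp add: adj_adj)
  also have "\<dots> = wd X (mat_adjoint X) n (rev (map Not bs) @ [\<not> b])"
    using wd_snoc[OF X Y] by simp
  finally show ?case by simp
qed

lemma tr_wd_conj: assumes X: "X \<in> carrier_mat n n"
  shows "tr (wd X (mat_adjoint X) n (rev (map Not bs))) = cnj (tr (wd X (mat_adjoint X) n bs))"
proof -
  have W: "wd X (mat_adjoint X) n bs \<in> carrier_mat n n" using X by auto
  show ?thesis using tr_adj[OF W] adj_wd[OF X] by simp
qed

definition Zm :: "nat \<Rightarrow> nat \<Rightarrow> complex mat \<Rightarrow> complex mat" where
  "Zm m d D = four_block_mat (0\<^sub>m m m) (0\<^sub>m m d) (0\<^sub>m d m) D"

lemma Zm_carrier[simp]: "D \<in> carrier_mat d d \<Longrightarrow> Zm m d D \<in> carrier_mat (m+d) (m+d)"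
  unfolding Zm_def by auto

lemma tr_Zm: "D \<in> carrier_mat d d \<Longrightarrow> tr (Zm m d D) = tr D"
  unfolding Zm_def by (rule tr_four_block_0)

lemma Zm_mult: "D \<in> carrier_mat d d \<Longrightarrow> D' \<in> carrier_mat d d \<Longrightarrow> Zm m d D * Zm m d D' = Zm m d (D * D')"
  unfolding Zm_def by (subst mult_four_block_mat[of _ m m _ d _ d _ _ m _ d]) auto

lemma Zm_inj: assumes D: "D \<in> carrier_mat d d" and D': "D' \<in> carrier_mat d d" and e: "Zm m d D = Zm m d D'"
  shows "D = D'"
proof (rule eq_matI)
  fix i j assume i: "i < dim_row D'" and j: "j < dim_col D'"
  have "Zm m d D $$ (m+i, m+j) = Zm m d D' $$ (m+i, m+j)" using e by simp
  thus "D $$ (i,j) = D' $$ (i,j)" unfolding Zm_def using i j D D' by simp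
qed (use D D' in auto)

context
  fixes A B C :: "complex mat" and m d :: nat
  assumes B: "B \<in> carrier_mat m d" and C: "C \<in> carrier_mat d d"
    and BC: "mat_adjoint B * B + mat_adjoint C * C = 1\<^sub>m d"
    and A: "A = four_block_mat (0\<^sub>m m m) B (0\<^sub>m d m) C"
begin

lemma A_carrier: "A \<in> carrier_mat (m+d) (m+d)" using A B C by auto

lemma adjA: "mat_adjoint A = four_block_mat (0\<^sub>m m m) (0\<^sub>m m d) (mat_adjoint B) (mat_adjoint C)"
  unfolding A by (subst adj_four_block[of _ m m _ d _ d]) (use B C in auto)

lemma adjA_carrier: "mat_adjoint A \<in> carrier_mat (m+d) (m+d)" using A_carrier by simp

lemma E_eq: "mat_adjoint A * A = Zm m d (1\<^sub>m d)"
proof -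
  have "mat_adjoint A * A = four_block_mat (0\<^sub>m m m) (0\<^sub>m m d) (0\<^sub>m d m) (mat_adjoint B * B + mat_adjoint C * C)"
    apply (subst adjA, simp only: A)
    using B C by (subst mult_four_block_mat[of _ m m _ d _ d _ _ m _ d]) auto
  thus ?thesis unfolding BC Zm_def .
qed

lemma ZA: "D \<in> carrier_mat d d \<Longrightarrow> Zm m d D * A = Zm m d (D * C)"
  unfolding Zm_def A using B C
  by (subst mult_four_block_mat[of _ m m _ d _ d _ _ m _ d]) auto

lemma AZ: "D \<in> carrier_mat d d \<Longrightarrow> mat_adjoint A * Zm m d D = Zm m d (mat_adjoint C * D)"
  unfolding Zm_def adjA using B C
  by (subst mult_four_block_mat[of _ m m _ d _ d _ _ m _ d]) auto

lemma ZAA: assumes D: "D \<in> carrier_mat d d" shows "Zm m d D * mat_adjoint A * A = Zm m d D"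
proof -
  have "Zm m d D * mat_adjoint A * A = Zm m d D * (mat_adjoint A * A)"
    using D adjA_carrier A_carrier by (intro assoc_mult_mat[of _ "m+d" "m+d" _ "m+d" _ "m+d"]) auto
  also have "\<dots> = Zm m d D" unfolding E_eq using D by (simp add: Zm_mult)
  finally show ?thesis .
qed

lemma AAA: "mat_adjoint A * mat_adjoint A * A = Zm m d (mat_adjoint C)"
proof -
  have "mat_adjoint A * mat_adjoint A * A = mat_adjoint A * (mat_adjoint A * A)"
    using adjA_carrier A_carrier by (intro assoc_mult_mat[of _ "m+d" "m+d" _ "m+d" _ "m+d"]) auto
  also have "\<dots> = Zm m d (mat_adjoint C)" unfolding E_eq using C by (simp add: AZ)
  finally show ?thesis .
qed

lemma EApow: "Zm m d (1\<^sub>m d) * A ^\<^sub>m k = Zm m d (C ^\<^sub>m k)"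
proof (induction k)
  case 0
  have r: "dim_row A = m+d" using A_carrier by auto
  have c: "dim_row C = d" using C by auto
  show ?case unfolding pow_mat.simps r c by (simp add: Zm_def)
next
  case (Suc k)
  have "Zm m d (1\<^sub>m d) * A ^\<^sub>m Suc k = Zm m d (1\<^sub>m d) * (A ^\<^sub>m k * A)"
    by simp
  also have "\<dots> = (Zm m d (1\<^sub>m d) * A ^\<^sub>m k) * A"
    by (rule assoc_mult_mat[symmetric, of _ "m+d" "m+d" _ "m+d" _ "m+d"]) (use A_carrier in auto)
  also have "\<dots> = Zm m d (C ^\<^sub>m Suc k)" unfolding Suc using C by (simp add: ZA)
  finally show ?case .
qed

lemma C_nilp: assumes "A ^\<^sub>m k = 0\<^sub>m (m+d) (m+d)" shows "C ^\<^sub>m k = 0\<^sub>m d d"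
proof -
  have "Zm m d (C ^\<^sub>m k) = Zm m d (1\<^sub>m d) * 0\<^sub>m (m+d) (m+d)" using EApow[of k] assms by metis
  also have "\<dots> = 0\<^sub>m (m+d) (m+d)" by (rule right_mult_zero_mat) (use C in simp)
  also have "\<dots> = Zm m d (0\<^sub>m d d)" unfolding Zm_def by simp
  finally have z: "Zm m d (C ^\<^sub>m k) = Zm m d (0\<^sub>m d d)" .
  show ?thesis by (rule Zm_inj[OF _ _ z]) (use C in auto)
qed

end

lemma herm_eq: assumes X: "X \<in> carrier_mat n n"
  shows "herm_part X \<theta> = (cis (-\<theta>) / 2) \<cdot>\<^sub>m X + (cis \<theta> / 2) \<cdot>\<^sub>m mat_adjoint X"
  by (rule eq_matI) (use X in \<open>auto simp: herm_part_def algebra_simps\<close>)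

lemma herm_carrier: "X \<in> carrier_mat n n \<Longrightarrow> herm_part X \<theta> \<in> carrier_mat n n"
  unfolding herm_part_def by auto

lemma tr_herm_pow: assumes X: "X \<in> carrier_mat n n"
  shows "tr ((herm_part X \<theta>) ^\<^sub>m k) = (\<Sum>bs\<leftarrow>allw k. (cis (-\<theta>) / 2) ^ cT bs * (cis \<theta> / 2) ^ cF bs * tr (wd X (mat_adjoint X) n bs))"
  unfolding herm_eq[OF X] by (rule tr_pow_expand) (use X in auto)

lemma herm_tr_eigen: assumes X: "X \<in> carrier_mat n n"
  shows "\<exists>es. length es = n \<and> set es = spectrum (herm_part X \<theta>) \<and> (\<forall>k. tr ((herm_part X \<theta>) ^\<^sub>m k) = (\<Sum>e\<leftarrow>es. e ^ k))"
proof -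
  have H: "herm_part X \<theta> \<in> carrier_mat n n" using herm_carrier[OF X] .
  obtain es where cp: "char_poly (herm_part X \<theta>) = (\<Prod>a\<leftarrow>es. [:- a, 1:])" and l: "length es = n"
    using char_poly_factorized[OF H] by auto
  show ?thesis using l spectrum_es[OF H cp] tr_pow_eigen[OF H cp] by auto
qed

lemma circ_finite: assumes X: "X \<in> carrier_mat n n" and circ: "circularity X"
  shows "\<exists>F. finite F \<and> (\<forall>\<theta>. tr ((herm_part X \<theta>) ^\<^sub>m k) \<in> F)"
proof -
  define S where "S = spectrum (herm_part X 0)"
  have finS: "finite S" unfolding S_def using card_finite_spectrum(1)[OF herm_carrier[OF X]] .
  define F where "F = (\<lambda>L. \<Sum>e\<leftarrow>L. e ^ k) ` {L. set L \<subseteq> S \<and> length L = n}"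
  have "finite F" unfolding F_def using finite_lists_length_eq[OF finS] by auto
  moreover have "tr ((herm_part X \<theta>) ^\<^sub>m k) \<in> F" for \<theta>
  proof -
    obtain es where l: "length es = n" and s: "set es = spectrum (herm_part X \<theta>)"
      and t: "tr ((herm_part X \<theta>) ^\<^sub>m k) = (\<Sum>e\<leftarrow>es. e ^ k)"
      using herm_tr_eigen[OF X] by blast
    have "set es = S" using s circ unfolding circularity_def S_def by auto
    thus ?thesis unfolding t F_def using l by auto
  qed
  ultimately show ?thesis by blast
qed

lemma circ_words: assumes X: "X \<in> carrier_mat n n" and circ: "circularity X" and j: "j \<noteq> k"
  shows "(\<Sum>bs\<leftarrow>allw k. if 2 * cF bs = j then tr (wd X (mat_adjoint X) n bs) else 0) = 0"
proof -
  obtain F where F: "finite F" "\<And>\<theta>. tr ((herm_part X \<theta>) ^\<^sub>m k) \<in> F"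
    using circ_finite[OF X circ, of k] by blast
  show ?thesis
    by (rule fourier_extract[OF F(1) _ j]) (use F(2) tr_herm_pow[OF X] in metis)
qed

lemma balanced_const: assumes z: "\<And>bs. bs \<in> set (allw k) \<Longrightarrow> cT bs \<noteq> cF bs \<Longrightarrow> t bs = 0"
  shows "(\<Sum>bs\<leftarrow>allw k. (cis (-\<theta>) / 2) ^ cT bs * (cis \<theta> / 2) ^ cF bs * t bs)
       = (\<Sum>bs\<leftarrow>allw k. (if cT bs = cF bs then (1/4) ^ cT bs * t bs else 0))"
proof (rule arg_cong[where f=sum_list], rule map_cong[OF refl])
  fix bs assume bs: "bs \<in> set (allw k)"
  show "(cis (-\<theta>) / 2) ^ cT bs * (cis \<theta> / 2) ^ cF bs * t bs = (if cT bs = cF bs then (1/4) ^ cT bs * t bs else 0)"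
  proof (cases "cT bs = cF bs")
    case True
    have "(cis (-\<theta>) / 2) ^ cT bs * (cis \<theta> / 2) ^ cF bs = ((cis (-\<theta>) * cis \<theta>) / 4) ^ cT bs"
      unfolding True[symmetric] by (simp add: power_mult_distrib[symmetric])
    also have "cis (-\<theta>) * cis \<theta> = 1" by (simp add: cis_mult)
    finally show ?thesis using True by (simp add: power_divide)
  next
    case False
    then show ?thesis using z[OF bs] by simp
  qed
qed

definition tw :: "complex mat \<Rightarrow> nat \<Rightarrow> bool list \<Rightarrow> complex" where
  "tw X n bs = tr (wd X (mat_adjoint X) n bs)"

lemma tw_rot: "X \<in> carrier_mat n n \<Longrightarrow> tw X n (b # bs) = tw X n (bs @ [b])"
  unfolding tw_def by (rule tr_wd_rot1) auto

lemma tw_conj: "X \<in> carrier_mat n n \<Longrightarrow> tw X n (rev (map Not bs)) = cnj (tw X n bs)"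
  unfolding tw_def by (rule tr_wd_conj)

lemma nilp_eig0: fixes C :: "complex mat"
  assumes C: "C \<in> carrier_mat d d" and nk: "C ^\<^sub>m k = 0\<^sub>m d d" and e: "e \<in> spectrum C"
  shows "e = 0"
proof -
  obtain v where ev: "eigenvector C v e" using e unfolding spectrum_def eigenvalue_def by auto
  have v: "v \<in> carrier_vec d" "v \<noteq> 0\<^sub>v d" using ev C unfolding eigenvector_def by auto
  have "C ^\<^sub>m k *\<^sub>v v = e ^ k \<cdot>\<^sub>v v" by (rule eigenvector_pow[OF C ev])
  moreover have "0\<^sub>m d d *\<^sub>v v = 0\<^sub>v d" using v by (intro eq_vecI) auto
  ultimately have z: "e ^ k \<cdot>\<^sub>v v = 0\<^sub>v d" using nk by simp
  obtain i where i: "i < d" "v $ i \<noteq> 0" using v by (metis eq_vecI carrier_vecD index_zero_vec)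
  have "(e ^ k \<cdot>\<^sub>v v) $ i = 0" using z i by simp
  hence "e ^ k * v $ i = 0" using i v by simp
  thus ?thesis using i by simp
qed

lemma tr_nilp: fixes C :: "complex mat"
  assumes C: "C \<in> carrier_mat d d" and nk: "C ^\<^sub>m k = 0\<^sub>m d d" and j: "j > 0"
  shows "tr (C ^\<^sub>m j) = 0"
proof -
  obtain es where cp: "char_poly C = (\<Prod>a\<leftarrow>es. [:- a, 1:])"
    using char_poly_factorized[OF C] by auto
  have "\<forall>e\<in>set es. e = 0" using spectrum_es[OF C cp] nilp_eig0[OF C nk] by auto
  hence "(\<Sum>e\<leftarrow>es. e ^ j) = 0" using j by (induction es) auto
  thus ?thesis using tr_pow_eigen[OF C cp] by simp
qed

context
  fixes A B C :: "complex mat" and m d :: nat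
  assumes B: "B \<in> carrier_mat m d" and C: "C \<in> carrier_mat d d"
    and BC: "mat_adjoint B * B + mat_adjoint C * C = 1\<^sub>m d"
    and A: "A = four_block_mat (0\<^sub>m m m) B (0\<^sub>m d m) C"
begin

lemmas Ac = A_carrier[OF B C BC A]
lemmas AE = E_eq[OF B C BC A]
lemmas AZA = ZA[OF B C BC A]
lemmas AZAA = ZAA[OF B C BC A]
lemmas AAAA = AAA[OF B C BC A]

lemma dimsA: "dim_row A = m+d" "dim_col A = m+d" using Ac by auto
lemma dimsC: "dim_row C = d" "dim_col C = d" using C by auto
lemma mult_dd: "X \<in> carrier_mat d d \<Longrightarrow> Y \<in> carrier_mat d d \<Longrightarrow> X * Y \<in> carrier_mat d d" by auto

lemma circ_C_traces:
  assumes circ: "circularity A" and trC: "tr C = 0" and trCC: "tr (C * C) = 0"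
  shows "tr (mat_adjoint C * C * C) = 0" "tr (mat_adjoint C * C * C * C) = 0"
proof -
  have s5: "(\<Sum>bs\<leftarrow>allw 5. if 2 * cF bs = 4 then tw A (m+d) bs else 0) = 0"
    using circ_words[OF Ac circ, of 4 5] unfolding tw_def by simp
  have v51: "tw A (m+d) [True,True,True,False,False] = tr (mat_adjoint C * C * C)"
    unfolding tw_def using C by (simp add: dimsA dimsC AAAA AZA tr_Zm mult_dd)
  have v52: "tw A (m+d) [True,True,False,True,False] = 0"
    unfolding tw_def using C trC by (simp add: dimsA dimsC AE AZA AZAA tr_Zm mult_dd)
  from s5 have "5 * tr (mat_adjoint C * C * C) = 0"
    using v51 v52 tw_rot[OF Ac, of "True" "[True,False,False,True]"] tw_rot[OF Ac, of "True" "[False,False,True,True]"] tw_rot[OF Ac, of "False" "[False,True,True,True]"] tw_rot[OF Ac, of "False" "[True,True,True,False]"] tw_rot[OF Ac, of "True" "[False,True,True,False]"] tw_rot[OF Ac, of "False" "[True,True,False,True]"] tw_rot[OF Ac, of "True" "[False,True,False,True]"] tw_rot[OF Ac, of "False" "[True,False,True,True]"]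
    by (simp add: eval_nat_numeral)
  thus "tr (mat_adjoint C * C * C) = 0" by simp
  have s6: "(\<Sum>bs\<leftarrow>allw 6. if 2 * cF bs = 4 then tw A (m+d) bs else 0) = 0"
    using circ_words[OF Ac circ, of 4 6] unfolding tw_def by simp
  have v61: "tw A (m+d) [True,True,True,True,False,False] = tr (mat_adjoint C * C * C * C)"
    unfolding tw_def using C by (simp add: dimsA dimsC AAAA AZA tr_Zm mult_dd)
  have v62: "tw A (m+d) [True,True,True,False,True,False] = 0"
    unfolding tw_def using C trCC by (simp add: dimsA dimsC AE AZA AZAA tr_Zm mult_dd)
  have v63: "tw A (m+d) [True,True,False,True,True,False] = 0"
    unfolding tw_def using C trCC by (simp add: dimsA dimsC AE AZA AZAA tr_Zm mult_dd)
  from s6 have "6 * tr (mat_adjoint C * C * C * C) = 0"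
    using v61 v62 v63 tw_rot[OF Ac, of "True" "[True,True,False,False,True]"] tw_rot[OF Ac, of "True" "[True,False,False,True,True]"] tw_rot[OF Ac, of "True" "[False,False,True,True,True]"] tw_rot[OF Ac, of "False" "[False,True,True,True,True]"] tw_rot[OF Ac, of "False" "[True,True,True,True,False]"] tw_rot[OF Ac, of "True" "[True,False,True,False,True]"] tw_rot[OF Ac, of "True" "[False,True,False,True,True]"] tw_rot[OF Ac, of "False" "[True,False,True,True,True]"] tw_rot[OF Ac, of "True" "[False,True,True,True,False]"] tw_rot[OF Ac, of "False" "[True,True,True,False,True]"] tw_rot[OF Ac, of "True" "[False,True,True,False,True]"] tw_rot[OF Ac, of "False" "[True,True,False,True,True]"]
    by (simp add: eval_nat_numeral)
  thus "tr (mat_adjoint C * C * C * C) = 0" by simp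
qed

end

lemma C_unbalanced:
  fixes C :: "complex mat"
  assumes Cc: "C \<in> carrier_mat d d"
    and z1: "tr C = 0" and z2: "tr (C * C) = 0" and z3: "tr (C * C * C) = 0" and z4: "tr (C * C * C * C) = 0"
    and y1: "tr (mat_adjoint C * C * C) = 0" and y2: "tr (mat_adjoint C * C * C * C) = 0"
    and bs: "bs \<in> set (allw k)" and k: "k \<le> 4" and u: "cT bs \<noteq> cF bs"
  shows "tw C d bs = 0"
proof -
  have dC: "dim_row C = d" "dim_col C = d" using Cc by auto
  have R11: "tw C d [True] = 0" unfolding tw_def using z1 dC by simp
  have R22: "tw C d [True,True] = 0" unfolding tw_def using z2 dC by simp
  have R33: "tw C d [True,True,True] = 0" unfolding tw_def using z3 dC by simp
  have R44: "tw C d [True,True,True,True] = 0" unfolding tw_def using z4 dC by simp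
  have R32: "tw C d [True,True,False] = 0" unfolding tw_def using y1 dC by simp
  have R43: "tw C d [True,True,True,False] = 0" unfolding tw_def using y2 dC by simp
  have WT: "tw C d [True] = 0" using R11 by simp
  have WTT: "tw C d [True,True] = 0" using R22 by simp
  have WTTT: "tw C d [True,True,True] = 0" using R33 by simp
  have WTTF: "tw C d [True,True,False] = 0" using R32 by simp
  have WTFT: "tw C d [True,False,True] = 0" using tw_rot[OF Cc, of "True" "[False,True]"] tw_rot[OF Cc, of "False" "[True,True]"] R32 by simp
  have WFTT: "tw C d [False,True,True] = 0" using tw_rot[OF Cc, of "False" "[True,True]"] R32 by simp
  have WTTTT: "tw C d [True,True,True,True] = 0" using R44 by simp
  have WTTTF: "tw C d [True,True,True,False] = 0" using R43 by simp
  have WTTFT: "tw C d [True,True,False,True] = 0" using tw_rot[OF Cc, of "True" "[True,False,True]"] tw_rot[OF Cc, of "True" "[False,True,True]"] tw_rot[OF Cc, of "False" "[True,True,True]"] R43 by simp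
  have WTFTT: "tw C d [True,False,True,True] = 0" using tw_rot[OF Cc, of "True" "[False,True,True]"] tw_rot[OF Cc, of "False" "[True,True,True]"] R43 by simp
  have WFTTT: "tw C d [False,True,True,True] = 0" using tw_rot[OF Cc, of "False" "[True,True,True]"] R43 by simp
  have WF: "tw C d [False] = 0" using tw_conj[OF Cc, of "[True]"] WT by simp
  have WFF: "tw C d [False,False] = 0" using tw_conj[OF Cc, of "[True,True]"] WTT by simp
  have WTFF: "tw C d [True,False,False] = 0" using tw_conj[OF Cc, of "[True,True,False]"] WTTF by simp
  have WFTF: "tw C d [False,True,False] = 0" using tw_conj[OF Cc, of "[True,False,True]"] WTFT by simp
  have WFFT: "tw C d [False,False,True] = 0" using tw_conj[OF Cc, of "[False,True,True]"] WFTT by simp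
  have WFFF: "tw C d [False,False,False] = 0" using tw_conj[OF Cc, of "[True,True,True]"] WTTT by simp
  have WTFFF: "tw C d [True,False,False,False] = 0" using tw_conj[OF Cc, of "[True,True,True,False]"] WTTTF by simp
  have WFTFF: "tw C d [False,True,False,False] = 0" using tw_conj[OF Cc, of "[True,True,False,True]"] WTTFT by simp
  have WFFTF: "tw C d [False,False,True,False] = 0" using tw_conj[OF Cc, of "[True,False,True,True]"] WTFTT by simp
  have WFFFT: "tw C d [False,False,False,True] = 0" using tw_conj[OF Cc, of "[False,True,True,True]"] WFTTT by simp
  have WFFFF: "tw C d [False,False,False,False] = 0" using tw_conj[OF Cc, of "[True,True,True,True]"] WTTTT by simp
  have "k = 0 \<or> k = 1 \<or> k = 2 \<or> k = 3 \<or> k = 4" using k by auto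
  thus ?thesis using bs u
    by (auto simp: eval_nat_numeral WT WF WTT WFF WTTT WTTF WTFT WTFF WFTT WFTF WFFT WFFF WTTTT WTTTF WTTFT WTFTT WTFFF WFTTT WFTFF WFFTF WFFFT WFFFF)
qed

lemma newton4: fixes a b c e z :: complex
  shows "24 * ((z-a)*(z-b)*(z-c)*(z-e)) = 24*z^4 - 24*(a+b+c+e)*z^3
   + 12*((a+b+c+e)^2 - (a^2+b^2+c^2+e^2))*z^2
   - 4*((a+b+c+e)^3 - 3*(a+b+c+e)*(a^2+b^2+c^2+e^2) + 2*(a^3+b^3+c^3+e^3))*z
   + ((a+b+c+e)^4 - 6*(a+b+c+e)^2*(a^2+b^2+c^2+e^2) + 3*(a^2+b^2+c^2+e^2)^2 + 8*(a+b+c+e)*(a^3+b^3+c^3+e^3) - 6*(a^4+b^4+c^4+e^4))"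
  by (simp add: algebra_simps power2_eq_square power3_eq_cube power4_eq_xxxx)

lemma list4: "length l = 4 \<Longrightarrow> \<exists>a b c e. l = [a,b,c,e]"
  by (auto simp: length_Suc_conv eval_nat_numeral)

lemma newton_list4: fixes xs ys :: "complex list"
  assumes lx: "length xs = 4" and ly: "length ys = 4"
    and p: "\<And>k. k \<in> {1,2,3,4} \<Longrightarrow> (\<Sum>x\<leftarrow>xs. x ^ k) = (\<Sum>y\<leftarrow>ys. y ^ k)"
  shows "(\<Prod>x\<leftarrow>xs. z - x) = (\<Prod>y\<leftarrow>ys. z - y)"
proof -
  obtain a b c e where x: "xs = [a,b,c,e]" using list4[OF lx] by blast
  obtain a' b' c' e' where y: "ys = [a',b',c',e']" using list4[OF ly] by blast
  have p1: "a+b+c+e = a'+b'+c'+e'" using p[of 1] x y by (simp add: add.assoc)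
  have p2: "a^2+b^2+c^2+e^2 = a'^2+b'^2+c'^2+e'^2" using p[of 2] x y by (simp add: add.assoc)
  have p3: "a^3+b^3+c^3+e^3 = a'^3+b'^3+c'^3+e'^3" using p[of 3] x y by (simp add: add.assoc)
  have p4: "a^4+b^4+c^4+e^4 = a'^4+b'^4+c'^4+e'^4" using p[of 4] x y by (simp add: add.assoc)
  have "24 * ((z-a)*(z-b)*(z-c)*(z-e)) = 24 * ((z-a')*(z-b')*(z-c')*(z-e'))"
    unfolding newton4 p1 p2 p3 p4 ..
  thus ?thesis using x y by (simp add: mult.assoc)
qed

lemma newton_lists: fixes xs ys :: "complex list"
  assumes lx: "length xs = d" and ly: "length ys = d" and d: "d \<le> 4"
    and p: "\<And>k. k \<in> {1,2,3,4} \<Longrightarrow> (\<Sum>x\<leftarrow>xs. x ^ k) = (\<Sum>y\<leftarrow>ys. y ^ k)"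
  shows "(\<Prod>x\<leftarrow>xs. [:- x, 1:]) = (\<Prod>y\<leftarrow>ys. [:- y, 1:])"
proof -
  define xs' where "xs' = xs @ replicate (4 - d) 0"
  define ys' where "ys' = ys @ replicate (4 - d) 0"
  have p': "(\<Sum>x\<leftarrow>xs'. x ^ k) = (\<Sum>y\<leftarrow>ys'. y ^ k)" if k: "k \<in> {1,2,3,4}" for k
  proof -
    have "k > 0" using k by auto
    thus ?thesis unfolding xs'_def ys'_def using p[OF k] by simp
  qed
  have "poly (\<Prod>x\<leftarrow>xs'. [:- x, 1:]) z = poly (\<Prod>y\<leftarrow>ys'. [:- y, 1:]) z" for z
  proof -
    have e: "poly (\<Prod>x\<leftarrow>l. [:- x, 1:]) z = (\<Prod>x\<leftarrow>l. z - x)" for l :: "complex list"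
      by (induction l) (auto simp: algebra_simps)
    show ?thesis unfolding e
      by (rule newton_list4) (use lx ly d p' in \<open>auto simp: xs'_def ys'_def\<close>)
  qed
  hence eq: "(\<Prod>x\<leftarrow>xs'. [:- x, 1:]) = (\<Prod>y\<leftarrow>ys'. [:- y, 1:])"
    using poly_eq_poly_eq_iff by blast
  have nz: "([:0, 1:] :: complex poly) ^ (4 - d) \<noteq> 0" by simp
  have "(\<Prod>x\<leftarrow>xs. [:- x, 1:]) * [:0, 1:] ^ (4 - d) = (\<Prod>y\<leftarrow>ys. [:- y, 1:]) * [:0, 1:] ^ (4 - d)"
    using eq unfolding xs'_def ys'_def by simp
  thus ?thesis using mult_right_cancel[OF nz] by blast
qed

theorem mainTheorem11:
  fixes B C :: "complex mat" and m d :: nat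
  assumes "B \<in> carrier_mat m d" and "C \<in> carrier_mat d d"
    and "mat_adjoint B * B + mat_adjoint C * C = 1\<^sub>m d"
    and "d \<le> 4"
    and "unitarily_irreducible (four_block_mat (0\<^sub>m m m) B (0\<^sub>m d m) C)"
    and "nilpotent_mat (four_block_mat (0\<^sub>m m m) B (0\<^sub>m d m) C)"
    and "circularity (four_block_mat (0\<^sub>m m m) B (0\<^sub>m d m) C)"
  shows "circularity C"
proof -
  note Bc = assms(1) and Cc = assms(2) and BC = assms(3) and d4 = assms(4)
  define A where "A = four_block_mat (0\<^sub>m m m) B (0\<^sub>m d m) C"
  have circ: "circularity A" using assms(7) unfolding A_def .
  have dA: "dim_row A = m + d" unfolding A_def using Bc Cc by simp
  obtain k where "A ^\<^sub>m k = 0\<^sub>m (dim_row A) (dim_row A)"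
    using assms(6) unfolding nilpotent_mat_def A_def by blast
  hence nA: "A ^\<^sub>m k = 0\<^sub>m (m+d) (m+d)" unfolding dA .
  have nk: "C ^\<^sub>m k = 0\<^sub>m d d" by (rule C_nilp[OF Bc Cc BC A_def nA])
  have dC: "dim_row C = d" "dim_col C = d" using Cc by auto
  have z1: "tr C = 0" using tr_nilp[OF Cc nk, of 1] dC by simp
  have z2: "tr (C * C) = 0" using tr_nilp[OF Cc nk, of 2] dC by (simp add: eval_nat_numeral)
  have z3: "tr (C * C * C) = 0" using tr_nilp[OF Cc nk, of 3] dC by (simp add: eval_nat_numeral)
  have z4: "tr (C * C * C * C) = 0" using tr_nilp[OF Cc nk, of 4] dC by (simp add: eval_nat_numeral)
  have y1: "tr (mat_adjoint C * C * C) = 0" and y2: "tr (mat_adjoint C * C * C * C) = 0"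
    using circ_C_traces[OF Bc Cc BC A_def circ z1 z2] by auto
  have trconst: "tr ((herm_part C \<theta>1) ^\<^sub>m j) = tr ((herm_part C \<theta>2) ^\<^sub>m j)" if j: "j \<le> 4" for j \<theta>1 \<theta>2
  proof -
    have u: "\<And>bs. bs \<in> set (allw j) \<Longrightarrow> cT bs \<noteq> cF bs \<Longrightarrow> tw C d bs = 0"
      by (rule C_unbalanced[OF Cc z1 z2 z3 z4 y1 y2 _ j])
    show ?thesis
      unfolding tr_herm_pow[OF Cc] tw_def[symmetric]
      using balanced_const[OF u, where \<theta>=\<theta>1] balanced_const[OF u, where \<theta>=\<theta>2] by simp
  qed
  show ?thesis unfolding circularity_def
  proof (intro allI)
    fix \<theta>1 \<theta>2 :: real
    have H1: "herm_part C \<theta>1 \<in> carrier_mat d d" and H2: "herm_part C \<theta>2 \<in> carrier_mat d d"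
      using herm_carrier[OF Cc] by auto
    obtain es1 where cp1: "char_poly (herm_part C \<theta>1) = (\<Prod>a\<leftarrow>es1. [:- a, 1:])" and l1: "length es1 = d"
      using char_poly_factorized[OF H1] by auto
    obtain es2 where cp2: "char_poly (herm_part C \<theta>2) = (\<Prod>a\<leftarrow>es2. [:- a, 1:])" and l2: "length es2 = d"
      using char_poly_factorized[OF H2] by auto
    have "(\<Prod>a\<leftarrow>es1. [:- a, 1:]) = (\<Prod>a\<leftarrow>es2. [:- a, 1:])"
    proof (rule newton_lists[OF l1 l2 d4])
      fix j :: nat assume "j \<in> {1,2,3,4}"
      hence "j \<le> 4" by auto
      thus "(\<Sum>x\<leftarrow>es1. x ^ j) = (\<Sum>y\<leftarrow>es2. y ^ j)"
        using trconst[of j \<theta>1 \<theta>2] tr_pow_eigen[OF H1 cp1] tr_pow_eigen[OF H2 cp2] by simp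
    qed
    hence "char_poly (herm_part C \<theta>1) = char_poly (herm_part C \<theta>2)" using cp1 cp2 by simp
    thus "spectrum (herm_part C \<theta>1) = spectrum (herm_part C \<theta>2)"
      using spectrum_root_char_poly[OF H1] spectrum_root_char_poly[OF H2] by simp
  qed
qed

end
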